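(* Let $M$ be a smooth Riemannian manifold embedded in $\mathbb{R}^p$, and let $\mathcal{D}\subset\mathbb{R}^d$ be a compact, connected, Lipschitz domain. Let $\mathcal{V}(\mathcal{D},\mathbb{R}^p)\subset C(\mathcal{D},\mathbb{R}^p)$ be a vector space of continuous functions, $\mathcal{V}_h(\mathcal{D},\mathbb{R}^p)\subset \mathcal{V}(\mathcal{D},\mathbb{R}^p)$ a finite-dimensional subspace, and $\mathcal{I}_h:\mathcal{V}(\mathcal{D},\mathbb{R}^p)\to\mathcal{V}_h(\mathcal{D},\mathbb{R}^p)$ a projection. Let $U\subset\mathbb{R}^p$ be a tubular neighborhood of $M$ on which the closest point projection $\mathcal{P}_M(v)=\operatorname{argmin}_{m\in M}\|m-v\|$ is well-defined and smooth. Let $\widetilde{\mathcal{V}}(\mathcal{D},M)=\{u\in\mathcal{V}(\mathcal{D},\mathbb{R}^p): u(x)\in M \text{ and } \mathcal{I}_hu(x)\in U \ \forall x\in\mathcal{D}\}$, and for $u\in\widetilde{\mathcal{V}}(\mathcal{D},M)$ define $(\mathcal{I}_{h,M}u)(x)=\mathcal{P}_M(\mathcal{I}_hu(x))$. Define $C_0(u)=\sup_{x\in\mathcal{D}}\|\nabla u(x)\|$, $C_1=\sup_{m\in M}\|\nabla\mathcal{P}_M(m)\|$, and $C_2=\sup_{u_1,u_2\in U,\,u_1\ne u_2}\frac{\|\nabla\mathcal{P}_M(u_1)-\nabla\mathcal{P}_M(u_2)\|}{\|u_1-u_2\|}$. Then for any $u\in\widetilde{\mathcal{V}}(\mathcal{D},M)\cap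 C^1(\mathcal{D},\mathbb{R}^p)$ and any $x\in\mathcal{D}$ (with $\mathcal{I}_hu$ differentiable at $x$), \[\|\nabla\mathcal{I}_{h,M}u(x)-\nabla u(x)\|\le C_1\|\nabla\mathcal{I}_hu(x)-\nabla u(x)\| + C_2\|\mathcal{I}_hu(x)-u(x)\|\big(\|\nabla\mathcal{I}_hu(x)-\nabla u(x)\|+C_0(u)\big).\]
   Context: $\|\cdot\|$ denotes the Euclidean norm on $\mathbb{R}^p$; for matrices, $\|\cdot\|$ denotes any consistent (submultiplicative, compatible) matrix norm. Here $\nabla u(x)\in\mathbb{R}^{p\times d}$ and $\nabla\mathcal{P}_M(v)\in\mathbb{R}^{p\times p}$ denote the gradients (Jacobian matrices) of $u$ and $\mathcal{P}_M$, viewed as $\mathbb{R}^p$-valued maps via the embedding $M\subset\mathbb{R}^p$. *)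

theory Defs
  imports "HOL-Analysis.Analysis"
begin

text \<open>Smooth (C-infinity) maps on an open set S: all iterated directional
derivatives exist (as Frechet derivatives) and are continuous on S.\<close>
definition smooth_on :: "'a::euclidean_space set \<Rightarrow> ('a \<Rightarrow> 'b::euclidean_space) \<Rightarrow> bool" where
  "smooth_on S f \<longleftrightarrow>
     (\<exists>F. f \<in> F \<and>
        (\<forall>g\<in>F. continuous_on S g \<and>
           (\<exists>Dg. (\<forall>x\<in>S. (g has_derivative Dg x) (at x)) \<and> (\<forall>v. (\<lambda>x. Dg x v) \<in> F))))"

text \<open>Smooth embedded submanifold of a Euclidean space (of some fixed dimension k),
via local straightening diffeomorphisms (submanifold charts). It carries the
Riemannian metric induced by the embedding.\<close>
definition smooth_embedded_submanifold :: "'a::euclidean_space set \<Rightarrow> bool" where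
  "smooth_embedded_submanifold M \<longleftrightarrow>
     (\<exists>k. \<forall>m\<in>M. \<exists>W (\<phi> :: 'a \<Rightarrow> 'a) (\<psi> :: 'a \<Rightarrow> 'a) L.
        open W \<and> m \<in> W \<and> open (\<phi> ` W) \<and>
        smooth_on W \<phi> \<and> smooth_on (\<phi> ` W) \<psi> \<and> (\<forall>y\<in>W. \<psi> (\<phi> y) = y) \<and>
        subspace L \<and> dim L = k \<and> \<phi> ` (M \<inter> W) = \<phi> ` W \<inter> L)"

text \<open>Lipschitz domain (bounded open set with boundary locally the graph of a
Lipschitz function), written coordinate-free: e is the local "vertical" unit direction
and the graph function g is evaluated on the hyperplane orthogonal to e.\<close>
definition lipschitz_domain :: "'a::euclidean_space set \<Rightarrow> bool" where
  "lipschitz_domain \<Omega> \<longleftrightarrow> open \<Omega> \<and> bounded \<Omega> \<and> \<Omega> \<noteq> {} \<and>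
     (\<forall>z\<in>frontier \<Omega>. \<exists>e r g L. norm e = 1 \<and> r > 0 \<and>
        (\<forall>a b. \<bar>g a - g b\<bar> \<le> L * norm (a - b)) \<and>
        \<Omega> \<inter> ball z r = {y \<in> ball z r. y \<bullet> e < (g :: 'a \<Rightarrow> real) (y - (y \<bullet> e) *\<^sub>R e)})"

definition compact_lipschitz_domain :: "'a::euclidean_space set \<Rightarrow> bool" where
  "compact_lipschitz_domain D \<longleftrightarrow> (\<exists>\<Omega>. lipschitz_domain \<Omega> \<and> D = closure \<Omega>)"

definition is_norm :: "('a::real_vector \<Rightarrow> real) \<Rightarrow> bool" where
  "is_norm N \<longleftrightarrow> (\<forall>A. N A \<ge> 0) \<and> (\<forall>A. N A = 0 \<longleftrightarrow> A = 0) \<and>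
     (\<forall>A B. N (A + B) \<le> N A + N B) \<and> (\<forall>c A. N (c *\<^sub>R A) = \<bar>c\<bar> * N A)"

definition consistent_matrix_norms ::
  "(real^'p^'p \<Rightarrow> real) \<Rightarrow> (real^'d^'p \<Rightarrow> real) \<Rightarrow> bool" where
  "consistent_matrix_norms Np Nd \<longleftrightarrow> is_norm Np \<and> is_norm Nd \<and>
     (\<forall>A B. Np (A ** B) \<le> Np A * Np B) \<and>
     (\<forall>A B. Nd (A ** B) \<le> Np A * Nd B) \<and>
     (\<forall>A v. norm (A *v v) \<le> Np A * norm v) \<and>
     (\<forall>B w. norm (B *v w) \<le> Nd B * norm w)"

text \<open>Abstract finite element setting: V a vector space of continuous functions on D
(functions are represented by extensions that vanish outside D), Vh a
finite-dimensional subspace, Ih a (linear) projection of V onto Vh.\<close>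
definition fun_subspace :: "'a set \<Rightarrow> ('a \<Rightarrow> 'b::real_vector) set \<Rightarrow> bool" where
  "fun_subspace D V \<longleftrightarrow> (\<lambda>x. 0) \<in> V \<and>
     (\<forall>f\<in>V. \<forall>g\<in>V. (\<lambda>x. f x + g x) \<in> V) \<and>
     (\<forall>c. \<forall>f\<in>V. (\<lambda>x. c *\<^sub>R f x) \<in> V) \<and>
     (\<forall>f\<in>V. \<forall>x. x \<notin> D \<longrightarrow> f x = 0)"

definition fe_setting ::
  "'a::topological_space set \<Rightarrow> ('a \<Rightarrow> 'b::real_normed_vector) set \<Rightarrow> ('a \<Rightarrow> 'b) set
     \<Rightarrow> (('a \<Rightarrow> 'b) \<Rightarrow> ('a \<Rightarrow> 'b)) \<Rightarrow> bool" where
  "fe_setting D V Vh Ih \<longleftrightarrow>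
     fun_subspace D V \<and> (\<forall>f\<in>V. continuous_on D f) \<and>
     fun_subspace D Vh \<and> Vh \<subseteq> V \<and>
     (\<exists>B. finite B \<and> B \<subseteq> Vh \<and>
        (\<forall>f\<in>Vh. \<exists>c. \<forall>x. f x = (\<Sum>b\<in>B. c b *\<^sub>R b x))) \<and>
     (\<forall>f\<in>V. Ih f \<in> Vh) \<and>
     (\<forall>f\<in>V. \<forall>g\<in>V. Ih (\<lambda>x. f x + g x) = (\<lambda>x. Ih f x + Ih g x)) \<and>
     (\<forall>c. \<forall>f\<in>V. Ih (\<lambda>x. c *\<^sub>R f x) = (\<lambda>x. c *\<^sub>R Ih f x)) \<and>
     (\<forall>f\<in>Vh. Ih f = f)"

end

theory Submission
  imports Defs
begin

lemma is_norm_sum: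
  assumes N: "is_norm N" and fin: "finite A"
  shows "N (\<Sum>b\<in>A. f b) \<le> (\<Sum>b\<in>A. N (f b))"
  using fin
proof (induction A rule: finite_induct)
  case empty then show ?case using N unfolding is_norm_def by (metis order_refl sum.empty)
next
  case (insert a A)
  have "N (f a + sum f A) \<le> N (f a) + N (sum f A)" using N by (simp add: is_norm_def)
  then show ?case using insert by simp
qed

lemma is_norm_bound:
  fixes x :: "'a::euclidean_space"
  assumes N: "is_norm N"
  shows "N x \<le> (\<Sum>b\<in>Basis. N b) * norm x"
proof -
  have "N x = N (\<Sum>b\<in>Basis. (x \<bullet> b) *\<^sub>R b)" by (simp add: euclidean_representation)
  also have "\<dots> \<le> (\<Sum>b\<in>Basis. N ((x \<bullet> b) *\<^sub>R b))" by (rule is_norm_sum[OF N]) simp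
  also have "\<dots> = (\<Sum>b\<in>Basis. \<bar>x \<bullet> b\<bar> * N b)" using N by (simp add: is_norm_def)
  also have "\<dots> \<le> (\<Sum>b\<in>Basis. norm x * N b)"
    by (rule sum_mono, rule mult_right_mono) (use N Basis_le_norm in \<open>auto simp: is_norm_def\<close>)
  also have "\<dots> = (\<Sum>b\<in>Basis. N b) * norm x" by (simp add: sum_distrib_left mult.commute)
  finally show ?thesis .
qed

lemma deriv_unique_dir:
  fixes f :: "'a::euclidean_space \<Rightarrow> 'b::real_normed_vector"
  assumes f1: "(f has_derivative f') (at x within S)"
    and f2: "(f has_derivative f'') (at x within S)"
    and w: "\<forall>e>0. \<exists>t. 0 < t \<and> t < e \<and> x + t *\<^sub>R w \<in> S"
  shows "f' w = f'' w"
proof -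
  define T where "T = {t::real. x + t *\<^sub>R w \<in> S}"
  have g: "((\<lambda>t. x + t *\<^sub>R w) has_derivative (\<lambda>t. t *\<^sub>R w)) (at 0 within T)"
    by (auto intro!: derivative_eq_intros)
  have sub: "(\<lambda>t. x + t *\<^sub>R w) ` T \<subseteq> S" by (auto simp: T_def)
  have c1: "((\<lambda>t. f (x + t *\<^sub>R w)) has_derivative (\<lambda>t. f' (t *\<^sub>R w))) (at 0 within T)"
    by (rule has_derivative_in_compose[OF g]) (use has_derivative_subset[OF f1 sub] in simp)
  have c2: "((\<lambda>t. f (x + t *\<^sub>R w)) has_derivative (\<lambda>t. f'' (t *\<^sub>R w))) (at 0 within T)"
    by (rule has_derivative_in_compose[OF g]) (use has_derivative_subset[OF f2 sub] in simp)
  have "(\<lambda>t. f' (t *\<^sub>R w)) = (\<lambda>t. f'' (t *\<^sub>R w))"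
  proof (rule frechet_derivative_unique_within[OF c1 c2])
    fix i :: real and e :: real assume "i \<in> Basis" "e > 0"
    then have i: "i = 1" by simp
    obtain t where "0 < t" "t < e" "x + t *\<^sub>R w \<in> S" using w \<open>e > 0\<close> by blast
    then show "\<exists>d. 0 < \<bar>d\<bar> \<and> \<bar>d\<bar> < e \<and> 0 + d *\<^sub>R i \<in> T"
      by (intro exI[of _ t]) (simp add: i T_def)
  qed
  then show ?thesis by (metis scaleR_one)
qed


lemma cone_lemma:
  fixes x :: "'a::euclidean_space"
  assumes D: "compact_lipschitz_domain D" and xD: "x \<in> D"
  shows "\<exists>w0 \<rho>. \<rho> > 0 \<and> (\<forall>w\<in>ball w0 \<rho>. \<forall>\<epsilon>>0. \<exists>t. 0 < t \<and> t < \<epsilon> \<and> x + t *\<^sub>R w \<in> D)"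
proof -
  obtain \<Omega> where L: "lipschitz_domain \<Omega>" and DO: "D = closure \<Omega>"
    using D unfolding compact_lipschitz_domain_def by blast
  have op: "open \<Omega>" using L unfolding lipschitz_domain_def by blast
  show ?thesis
  proof (cases "x \<in> \<Omega>")
    case True
    obtain r where r: "r > 0" "ball x r \<subseteq> \<Omega>" using openE[OF op \<open>x \<in> \<Omega>\<close>] by blast
    show ?thesis
    proof (rule exI[of _ 0], rule exI[of _ 1], intro conjI ballI allI impI)
      fix w :: 'a and \<epsilon> :: real assume w: "w \<in> ball 0 1" and e: "\<epsilon> > 0"
      define t where "t = min \<epsilon> r / 2"
      have "norm w < 1" using w by simp
      have "0 < t" "t < \<epsilon>" using e r by (auto simp: t_def)
      have "dist x (x + t *\<^sub>R w) < r"
      proof -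
        have "dist x (x + t *\<^sub>R w) = t * norm w" using \<open>0 < t\<close> by (simp add: dist_norm)
        also have "\<dots> \<le> t" using \<open>norm w < 1\<close> \<open>0 < t\<close> by (simp add: mult_left_le)
        also have "\<dots> < r" using r by (simp add: t_def)
        finally show ?thesis .
      qed
      then have "x + t *\<^sub>R w \<in> D" using r(2) DO closure_subset[of \<Omega>] by (auto simp: dist_commute)
      then show "\<exists>t>0. t < \<epsilon> \<and> x + t *\<^sub>R w \<in> D" using \<open>0 < t\<close> \<open>t < \<epsilon>\<close> by blast
    qed simp
  next
    case False
    then have "x \<in> frontier \<Omega>" using xD DO op by (simp add: frontier_def interior_open)
    then obtain e r g L where e: "norm e = 1" and r: "r > 0"
      and g: "\<forall>a b. \<bar>g a - g b\<bar> \<le> L * norm (a - b)"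
      and eq: "\<Omega> \<inter> ball x r = {y \<in> ball x r. y \<bullet> e < (g :: 'a \<Rightarrow> real) (y - (y \<bullet> e) *\<^sub>R e)}"
      using L unfolding lipschitz_domain_def by blast
    define P where "P = (\<lambda>y. y - (y \<bullet> e) *\<^sub>R e)"
    have Pdiff: "P a - P b = P (a - b)" for a b by (simp add: P_def algebra_simps inner_diff_left)
    have Pnorm: "norm (P a) \<le> 2 * norm a" for a
    proof -
      have "norm (P a) \<le> norm a + norm ((a \<bullet> e) *\<^sub>R e)" unfolding P_def by (rule norm_triangle_ineq4)
      also have "norm ((a \<bullet> e) *\<^sub>R e) = \<bar>a \<bullet> e\<bar>" using e by simp
      also have "\<bar>a \<bullet> e\<bar> \<le> norm a" using Cauchy_Schwarz_ineq2[of a e] e by simp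
      finally show ?thesis by simp
    qed
    have L0: "L \<ge> 0"
    proof -
      have "0 \<le> \<bar>g e - g 0\<bar>" by simp
      also have "\<dots> \<le> L * norm (e - 0)" using g by blast
      finally show ?thesis using e by simp
    qed
    have glow: "g (P y) \<ge> g (P x) - L * norm (P (y - x))" for y
      using g[rule_format, of "P y" "P x"] Pdiff[of y x] by (simp add: abs_le_iff)
    have xle: "x \<bullet> e \<le> g (P x)"
    proof (rule ccontr)
      assume nle: "\<not> ?thesis"
      define \<eta> where "\<eta> = x \<bullet> e - g (P x)"
      have "\<eta> > 0" using nle by (simp add: \<eta>_def)
      have "x \<in> closure \<Omega>" using xD DO by simp
      then obtain z where z: "z \<in> \<Omega>" "dist z x < min r (\<eta> / (1 + 2 * L))"
      proof -
        have "min r (\<eta> / (1 + 2 * L)) > 0" using \<open>\<eta> > 0\<close> r L0 by simp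
        then show ?thesis using that \<open>x \<in> closure \<Omega>\<close> unfolding closure_approachable by blast
      qed
      have "z \<in> ball x r" using z by (simp add: dist_commute)
      then have zlt: "z \<bullet> e < g (P z)" using eq z(1) unfolding P_def by blast
      have d: "norm (z - x) < \<eta> / (1 + 2 * L)" using z by (simp add: dist_norm)
      have "g (P z) \<le> g (P x) + L * norm (P (z - x))"
        using g[rule_format, of "P z" "P x"] Pdiff[of z x] by (simp add: abs_le_iff)
      also have "\<dots> \<le> g (P x) + L * (2 * norm (z - x))"
        using Pnorm[of "z - x"] L0 by (simp add: mult_left_mono)
      finally have A: "g (P z) \<le> g (P x) + 2 * L * norm (z - x)" by simp
      have B: "z \<bullet> e \<ge> x \<bullet> e - norm (z - x)"
      proof -
        have "\<bar>(z - x) \<bullet> e\<bar> \<le> norm (z - x)" using Cauchy_Schwarz_ineq2[of "z - x" e] e by simp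
        then show ?thesis by (simp add: inner_diff_left)
      qed
      have "\<eta> < (1 + 2 * L) * norm (z - x)" using A B zlt by (simp add: \<eta>_def algebra_simps)
      moreover have "(1 + 2 * L) * norm (z - x) < \<eta>" using d L0
        by (simp add: pos_less_divide_eq mult.commute)
      ultimately show False by simp
    qed
    define \<rho> where "\<rho> = 1 / (4 * (1 + L))"
    have \<rho>: "\<rho> > 0" "\<rho> \<le> 1/4" "2 * \<rho> * (1 + L) = 1/2" using L0 by (auto simp: \<rho>_def field_simps)
    show ?thesis
    proof (rule exI[of _ "- e"], rule exI[of _ \<rho>], intro conjI ballI allI impI)
      show "\<rho> > 0" by fact
      fix w :: 'a and \<epsilon> :: real assume w: "w \<in> ball (- e) \<rho>" and ep: "\<epsilon> > 0"
      define \<delta> where "\<delta> = w + e"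
      have nd: "norm \<delta> < \<rho>" using w norm_minus_commute[of "- e" w] by (simp add: \<delta>_def dist_norm add.commute)
      have we: "w = \<delta> - e" by (simp add: \<delta>_def)
      have de: "\<bar>\<delta> \<bullet> e\<bar> \<le> norm \<delta>" using Cauchy_Schwarz_ineq2[of \<delta> e] e by simp
      have ee: "e \<bullet> e = 1" using e by (simp add: dot_square_norm)
      have Pe: "P e = 0" using ee by (simp add: P_def)
      have Pw: "P w = P \<delta>" using we Pdiff[of \<delta> e] Pe by simp
      have nw: "norm w \<le> 2" using nd \<rho> e norm_triangle_ineq4[of \<delta> e] unfolding we by linarith
      define t where "t = min \<epsilon> r / 4"
      have t: "0 < t" "t < \<epsilon>" "t * 2 < r" using ep r by (auto simp: t_def)
      have ball: "x + t *\<^sub>R w \<in> ball x r"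
      proof -
        have "dist x (x + t *\<^sub>R w) = t * norm w" using t by (simp add: dist_norm)
        also have "\<dots> \<le> t * 2" using nw t by (simp add: mult_left_mono)
        finally show ?thesis using t by simp
      qed
      have "(x + t *\<^sub>R w) \<bullet> e = x \<bullet> e + t * (w \<bullet> e)" by (simp add: inner_add_left)
      also have "w \<bullet> e = \<delta> \<bullet> e - 1" using we ee by (simp add: inner_diff_left)
      finally have ye: "(x + t *\<^sub>R w) \<bullet> e = x \<bullet> e + t * (\<delta> \<bullet> e - 1)" .
      have "g (P (x + t *\<^sub>R w)) \<ge> g (P x) - L * norm (P (t *\<^sub>R w))"
        using glow[of "x + t *\<^sub>R w"] by simp
      moreover have "P (t *\<^sub>R w) = t *\<^sub>R P \<delta>" unfolding Pw[symmetric] by (simp add: P_def scaleR_right_diff_distrib)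
      moreover have "norm (P \<delta>) \<le> 2 * \<rho>" using Pnorm[of \<delta>] nd by linarith
      ultimately have gy: "g (P (x + t *\<^sub>R w)) \<ge> g (P x) - L * (t * (2 * \<rho>))"
        using t L0 by (smt (verit, ccfv_SIG) mult_left_mono norm_scaleR abs_of_pos)
      have "t * (\<delta> \<bullet> e - 1) + L * (t * (2 * \<rho>)) < 0"
      proof -
        have "\<delta> \<bullet> e - 1 + L * (2 * \<rho>) \<le> \<rho> - 1 + L * (2 * \<rho>)" using de nd by linarith
        also have "\<dots> < 0" using \<rho> L0 by (simp add: algebra_simps)
        finally have "\<delta> \<bullet> e - 1 + L * (2 * \<rho>) < 0" .
        then have "t * (\<delta> \<bullet> e - 1 + L * (2 * \<rho>)) < 0" using t(1) by (simp add: mult_pos_neg)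
        then show ?thesis by (simp add: algebra_simps)
      qed
      then have "(x + t *\<^sub>R w) \<bullet> e < g (P (x + t *\<^sub>R w))" using ye gy xle by linarith
      then have "x + t *\<^sub>R w \<in> \<Omega>" using eq ball unfolding P_def by blast
      then show "\<exists>t>0. t < \<epsilon> \<and> x + t *\<^sub>R w \<in> D"
        using t DO closure_subset by blast
    qed
  qed
qed

lemma matrix_deriv_unique:
  fixes f :: "real^'d \<Rightarrow> real^'p"
  assumes D: "compact_lipschitz_domain D" and xD: "x \<in> D"
    and A: "(f has_derivative (\<lambda>h. A *v h)) (at x within D)"
    and B: "(f has_derivative (\<lambda>h. B *v h)) (at x within D)"
  shows "A = B"
proof -
  obtain w0 \<rho> where \<rho>: "\<rho> > 0" and c: "\<forall>w\<in>ball w0 \<rho>. \<forall>\<epsilon>>0. \<exists>t. 0 < t \<and> t < \<epsilon> \<and> x + t *\<^sub>R w \<in> D"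
    using cone_lemma[OF D xD] by blast
  have bw: "A *v w = B *v w" if "w \<in> ball w0 \<rho>" for w
    using deriv_unique_dir[OF A B, of w] c that by blast
  have "A *v v = B *v v" for v
  proof -
    define s where "s = \<rho> / (2 * (norm v + 1))"
    have s: "s > 0" using \<rho> by (simp add: s_def add_nonneg_pos)
    have "norm (s *\<^sub>R v) < \<rho>"
    proof -
      have "norm (s *\<^sub>R v) = \<rho> * norm v / (2 * (norm v + 1))" using s \<rho> by (simp add: s_def)
      also have "\<dots> < \<rho>"
      proof -
        have lt: "norm v < 2 * (norm v + 1)" using norm_ge_zero[of v] by (smt (verit))
        have "\<rho> * norm v < \<rho> * (2 * (norm v + 1))" using mult_strict_left_mono[OF lt \<rho>] .
        moreover have pos: "2 * (norm v + 1) > 0" by (simp add: add_nonneg_pos)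
        ultimately show ?thesis by (subst pos_divide_less_eq[OF pos]) (simp add: mult.commute)
      qed
      finally show ?thesis .
    qed
    then have "w0 + s *\<^sub>R v \<in> ball w0 \<rho>" by (simp add: dist_norm)
    from bw[OF this] bw[of w0] \<rho>
    have "s *\<^sub>R (A *v v) = s *\<^sub>R (B *v v)"
      by (simp add: matrix_vector_right_distrib matrix_vector_mult_scaleR)
    then show ?thesis using s by simp
  qed
  then show ?thesis by (simp add: matrix_eq)
qed

theorem proposition2p3:
  fixes M U :: "(real^'p) set"
    and D :: "(real^'d) set"
    and V Vh :: "(real^'d \<Rightarrow> real^'p) set"
    and Ih :: "(real^'d \<Rightarrow> real^'p) \<Rightarrow> (real^'d \<Rightarrow> real^'p)"
    and DP :: "real^'p \<Rightarrow> real^'p^'p"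
    and Np :: "real^'p^'p \<Rightarrow> real"
    and Nd :: "real^'d^'p \<Rightarrow> real"
    and u :: "real^'d \<Rightarrow> real^'p"
    and Du :: "real^'d \<Rightarrow> real^'d^'p"
    and x :: "real^'d"
    and DI :: "real^'d^'p"
    and G :: "real^'d^'p"
  assumes norms: "consistent_matrix_norms Np Nd"
    and manifold: "smooth_embedded_submanifold M"
    and domain: "compact D" "connected D" "compact_lipschitz_domain D"
    and fe: "fe_setting D V Vh Ih"
    and U_open: "open U" and M_sub_U: "M \<subseteq> U"
    and P_welldef: "\<forall>v\<in>U. \<exists>!m. m \<in> M \<and> (\<forall>m'\<in>M. dist v m \<le> dist v m')"
    and P_smooth: "smooth_on U (closest_point M)"
    and DP_grad: "\<forall>v\<in>U. (closest_point M has_derivative (\<lambda>h. DP v *v h)) (at v)"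
    and C1_fin: "bdd_above ((\<lambda>m. Np (DP m)) ` M)"
    and C2_fin: "bdd_above ((\<lambda>(v1, v2). Np (DP v1 - DP v2) / norm (v1 - v2)) `
                              {(v1, v2). v1 \<in> U \<and> v2 \<in> U \<and> v1 \<noteq> v2})"
    and u_V: "u \<in> V"
    and u_M: "\<forall>y\<in>D. u y \<in> M"
    and Ihu_U: "\<forall>y\<in>D. Ih u y \<in> U"
    and u_C1: "\<forall>y\<in>D. (u has_derivative (\<lambda>h. Du y *v h)) (at y within D)"
    and Du_cont: "continuous_on D Du"
    and x_D: "x \<in> D"
    and DI_grad: "(Ih u has_derivative (\<lambda>h. DI *v h)) (at x within D)"
    and G_grad: "((\<lambda>y. closest_point M (Ih u y)) has_derivative (\<lambda>h. G *v h)) (at x within D)"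
  shows "Nd (G - Du x)
           \<le> (SUP m\<in>M. Np (DP m)) * Nd (DI - Du x)
             + (SUP (v1, v2)\<in>{(v1, v2). v1 \<in> U \<and> v2 \<in> U \<and> v1 \<noteq> v2}.
                   Np (DP v1 - DP v2) / norm (v1 - v2))
               * norm (Ih u x - u x) * (Nd (DI - Du x) + (SUP y\<in>D. Nd (Du y)))"
proof -
  define v where "v = Ih u x"
  define m where "m = u x"
  define A where "A = DI - Du x"
  define E where "E = DP v - DP m"
  define C1 where "C1 = (SUP m\<in>M. Np (DP m))"
  define C2 where "C2 = (SUP (v1, v2)\<in>{(v1, v2). v1 \<in> U \<and> v2 \<in> U \<and> v1 \<noteq> v2}.
                   Np (DP v1 - DP v2) / norm (v1 - v2))"
  define C0 where "C0 = (SUP y\<in>D. Nd (Du y))"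
  have Np: "is_norm Np" and Nd: "is_norm Nd"
    and Ndmul: "\<And>A B. Nd (A ** B) \<le> Np A * Nd B"
    using norms unfolding consistent_matrix_norms_def by blast+
  have mM: "m \<in> M" using u_M x_D by (simp add: m_def)
  have mU: "m \<in> U" using mM M_sub_U by blast
  have vU: "v \<in> U" using Ihu_U x_D by (simp add: v_def)
  have DL: "compact_lipschitz_domain D" using domain by blast
  have "((\<lambda>y. closest_point M (Ih u y)) has_derivative (\<lambda>h. DP v *v (DI *v h))) (at x within D)"
    by (rule has_derivative_in_compose[OF DI_grad], rule has_derivative_at_withinI)
       (use DP_grad vU in \<open>simp add: v_def\<close>)
  then have "((\<lambda>y. closest_point M (Ih u y)) has_derivative (\<lambda>h. (DP v ** DI) *v h)) (at x within D)"
    by (simp add: matrix_vector_mul_assoc)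
  then have Geq: "G = DP v ** DI" using matrix_deriv_unique[OF DL x_D G_grad] by blast
  \<comment> \<open>Du x is fixed by DP m\<close>
  have ux: "(u has_derivative (\<lambda>h. Du x *v h)) (at x within D)" using u_C1 x_D by blast
  have "((\<lambda>y. closest_point M (u y)) has_derivative (\<lambda>h. DP m *v (Du x *v h))) (at x within D)"
    by (rule has_derivative_in_compose[OF ux], rule has_derivative_at_withinI)
       (use DP_grad mU in \<open>simp add: m_def\<close>)
  then have "((\<lambda>y. closest_point M (u y)) has_derivative (\<lambda>h. (DP m ** Du x) *v h)) (at x within D)"
    by (simp add: matrix_vector_mul_assoc)
  then have "(u has_derivative (\<lambda>h. (DP m ** Du x) *v h)) (at x within D)"
    by (rule has_derivative_transform_within[of _ _ _ _ 1]) (use x_D u_M closest_point_self in auto)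
  then have Dueq: "Du x = DP m ** Du x" using matrix_deriv_unique[OF DL x_D ux] by blast
  have split: "G - Du x = DP m ** A + E ** (A + Du x)"
  proof -
    have "(G - Du x) *v h = (DP m ** A + E ** (A + Du x)) *v h" for h
    proof -
      have "(G - Du x) *v h = DP v *v (DI *v h) - DP m *v (Du x *v h)"
        using Dueq by (metis Geq matrix_vector_mul_assoc matrix_vector_mult_diff_rdistrib)
      also have "\<dots> = (DP m ** A + E ** (A + Du x)) *v h"
        by (simp add: A_def E_def matrix_vector_mul_assoc[symmetric] algebra_simps)
      finally show ?thesis .
    qed
    then show ?thesis by (simp add: matrix_eq)
  qed
  have NdA: "Nd A \<ge> 0" "Nd (Du x) \<ge> 0" using Nd unfolding is_norm_def by blast+
  have NpE: "Np E \<ge> 0" using Np unfolding is_norm_def by blast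
  have c1: "Np (DP m) \<le> C1" unfolding C1_def by (rule cSUP_upper[OF mM C1_fin])
  have c2: "Np E \<le> C2 * norm (v - m)"
  proof (cases "v = m")
    case True
    then have "E = 0" by (simp add: E_def)
    moreover have "Np 0 = 0" using Np unfolding is_norm_def by blast
    ultimately show ?thesis using True by simp
  next
    case False
    then have nz: "norm (v - m) > 0" by simp
    have "Np E / norm (v - m) \<le> C2"
      unfolding C2_def E_def
      by (rule cSUP_upper2[OF C2_fin, of "(v, m)"]) (use vU mU False in auto)
    then show ?thesis using nz by (simp add: pos_divide_le_eq)
  qed
  have c0: "Nd (Du x) \<le> C0"
  proof -
    have "compact (Du ` D)" using compact_continuous_image[OF Du_cont] domain by blast
    then obtain B where B: "\<forall>y\<in>D. norm (Du y) \<le> B"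
      using compact_imp_bounded bounded_iff by (metis imageI)
    have "bdd_above ((\<lambda>y. Nd (Du y)) ` D)"
    proof (rule bdd_aboveI2)
      fix y assume "y \<in> D"
      have "Nd (Du y) \<le> (\<Sum>b\<in>Basis. Nd b) * norm (Du y)" by (rule is_norm_bound[OF Nd])
      also have "\<dots> \<le> (\<Sum>b\<in>Basis. Nd b) * B"
        using B \<open>y \<in> D\<close> Nd by (intro mult_left_mono sum_nonneg) (auto simp: is_norm_def)
      finally show "Nd (Du y) \<le> (\<Sum>b\<in>Basis. Nd b) * B" .
    qed
    then show ?thesis unfolding C0_def by (rule cSUP_upper[OF x_D])
  qed
  have "Nd (G - Du x) \<le> Nd (DP m ** A) + Nd (E ** (A + Du x))"
    using split Nd unfolding is_norm_def by metis
  also have "\<dots> \<le> Np (DP m) * Nd A + Np E * (Nd A + Nd (Du x))"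
  proof -
    have "Nd (E ** (A + Du x)) \<le> Np E * Nd (A + Du x)" by (rule Ndmul)
    also have "\<dots> \<le> Np E * (Nd A + Nd (Du x))"
      using Nd NpE unfolding is_norm_def by (simp add: mult_left_mono)
    finally show ?thesis using Ndmul[of "DP m" A] by linarith
  qed
  also have "\<dots> \<le> C1 * Nd A + (C2 * norm (v - m)) * (Nd A + C0)"
  proof -
    have "Np (DP m) * Nd A \<le> C1 * Nd A" using c1 NdA by (simp add: mult_right_mono)
    moreover have "Np E * (Nd A + Nd (Du x)) \<le> (C2 * norm (v - m)) * (Nd A + C0)"
      using c2 c0 NpE NdA by (intro mult_mono) auto
    ultimately show ?thesis by linarith
  qed
  finally show ?thesis by (simp add: C1_def C2_def C0_def A_def v_def m_def mult.assoc)
qed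

end
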